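(* Let $\mathcal{S}$ be a temporal feedback graph on $T$ rounds such that every neighborhood $S_t$ is contained in the union of at most $R$ orders of $\mathcal{S}$. Then $\mathsf{UB}(\mathcal{S})\le\sqrt{R}\,\mathsf{LB}(\mathcal{S})$, i.e. $\mathsf{UB}(\mathcal{S})/\mathsf{LB}(\mathcal{S})\le\sqrt{R}$.
   Context: A temporal feedback graph $\mathcal{S}$ is a collection of subsets $S_t\subseteq[T]\setminus\{t\}$, $t\in[T]$. An order is a sequence of rounds $t_1,\dots,t_w$ with $t_u\in S_{t_v}$ for all $u<v$; maximal if no super-sequence is an order; $C_1,\dots,C_N$ are the maximal orders. $\mathsf{UB}(\mathcal{S})$ is the optimal value of: minimize $\sum_{c=1}^N\sqrt{\sum_{t\in C_c}\lambda_{c,t}^2}$ subject to $\sum_c\lambda_{c,t}=1$ for all $t$, $\lambda_{c,t}=0$ if $t\notin C_c$, $\lambda_{c,t}\ge0$ (equivalently, the optimal value of: maximize $\sum_t\mu_t$ s.t. $\sum_{t\in C_c}\mu_t^2\le1$ for all $c$, $\mu\ge0$). $\mathsf{LB}(\mathcal{S})$ is the optimal value (supremum) of the lower bound program: maximize $\sum_{t=1}^T\varepsilon_t$ subject to $\sum_{t\in S_{t'}}\varepsilon_t^2\le1$ for all $t'\in[T]$ and $\varepsilon_t\ge0$. *)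

theory Defs
  imports "HOL-Analysis.Analysis" "HOL-Library.Sublist"
begin

definition tfg :: "nat \<Rightarrow> (nat \<Rightarrow> nat set) \<Rightarrow> bool" where
  "tfg T S \<longleftrightarrow> (\<forall>t\<in>{1..T}. S t \<subseteq> {1..T} - {t})"

definition is_order :: "nat \<Rightarrow> (nat \<Rightarrow> nat set) \<Rightarrow> nat list \<Rightarrow> bool" where
  "is_order T S ts \<longleftrightarrow> set ts \<subseteq> {1..T} \<and>
     (\<forall>u v. u < v \<and> v < length ts \<longrightarrow> ts ! u \<in> S (ts ! v))"

definition is_max_order :: "nat \<Rightarrow> (nat \<Rightarrow> nat set) \<Rightarrow> nat list \<Rightarrow> bool" where
  "is_max_order T S ts \<longleftrightarrow> is_order T S ts \<and>
     (\<forall>ys. is_order T S ys \<and> subseq ts ys \<longrightarrow> ys = ts)"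

definition max_orders :: "nat \<Rightarrow> (nat \<Rightarrow> nat set) \<Rightarrow> nat list set" where
  "max_orders T S = {ts. is_max_order T S ts}"

definition UB :: "nat \<Rightarrow> (nat \<Rightarrow> nat set) \<Rightarrow> real" where
  "UB T S = Inf {(\<Sum>c\<in>max_orders T S. sqrt (\<Sum>t\<in>set c. (lam c t)\<^sup>2)) | lam.
       (\<forall>t\<in>{1..T}. (\<Sum>c\<in>max_orders T S. lam c t) = 1) \<and>
       (\<forall>c\<in>max_orders T S. \<forall>t. t \<notin> set c \<longrightarrow> lam c t = 0) \<and>
       (\<forall>c t. lam c t \<ge> 0)}"

text \<open>LB: supremum of the lower bound program (in the extended reals, since it can be unbounded).\<close>
definition LB :: "nat \<Rightarrow> (nat \<Rightarrow> nat set) \<Rightarrow> ereal" where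
  "LB T S = Sup {ereal (\<Sum>t\<in>{1..T}. eps t) | eps.
       (\<forall>t'\<in>{1..T}. (\<Sum>t\<in>S t'. (eps t)\<^sup>2) \<le> 1) \<and> (\<forall>t. eps t \<ge> 0)}"

end

theory Submission
  imports Defs
begin

lemma order_distinct:
  assumes "tfg T S" "is_order T S ts" shows "distinct ts"
proof -
  have "ts ! u \<noteq> ts ! v" if "u < v" "v < length ts" for u v
  proof -
    have "ts ! v \<in> {1..T}" using assms(2) that unfolding is_order_def by (meson nth_mem subsetD)
    moreover have "ts ! u \<in> S (ts ! v)" using assms(2) that unfolding is_order_def by blast
    ultimately show ?thesis using assms(1) unfolding tfg_def by blast
  qed
  then show ?thesis unfolding distinct_conv_nth by (metis linorder_neqE_nat)
qed

lemma order_length: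
  assumes "tfg T S" "is_order T S ts" shows "length ts \<le> T"
proof -
  have "length ts = card (set ts)" using order_distinct[OF assms] by (simp add: distinct_card)
  also have "\<dots> \<le> card {1..T}" using assms(2) unfolding is_order_def by (intro card_mono) auto
  finally show ?thesis by simp
qed

lemma finite_max_orders:
  assumes "tfg T S" shows "finite (max_orders T S)"
proof (rule finite_subset[OF _ finite_lists_length_le[of "{1..T}" T]])
  show "max_orders T S \<subseteq> {xs. set xs \<subseteq> {1..T} \<and> length xs \<le> T}"
    using order_length[OF assms] unfolding max_orders_def is_max_order_def is_order_def
    by (auto simp: is_order_def)
qed simp

lemma max_order_sub:
  assumes "c \<in> max_orders T S" shows "set c \<subseteq> {1..T}"
  using assms unfolding max_orders_def is_max_order_def is_order_def by auto

lemma extend_order: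
  assumes "tfg T S" "is_order T S o0" shows "\<exists>c\<in>max_orders T S. set o0 \<subseteq> set c"
proof -
  define P where "P ys \<longleftrightarrow> is_order T S ys \<and> subseq o0 ys" for ys
  have "P o0" using assms(2) unfolding P_def by (simp add: subseq_order.refl)
  moreover have "\<forall>y. P y \<longrightarrow> length y < Suc T" using order_length[OF assms(1)] unfolding P_def by (simp add: less_Suc_eq_le)
  ultimately obtain ys where n: "P ys" "\<forall>y. P y \<longrightarrow> length y \<le> length ys" using ex_has_greatest_nat[of P o0 length "Suc T"] by blast
  define n where "n = length ys"
  have ys: "is_order T S ys" "subseq o0 ys" "length ys = n" using n(1) unfolding P_def n_def by auto
  note n = n(1) n(2)[folded n_def]
  have "is_max_order T S ys" unfolding is_max_order_def
  proof (intro conjI allI impI)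
    fix zs assume zs: "is_order T S zs \<and> subseq ys zs"
    then have "subseq o0 zs" using ys(2) subseq_order.trans[of o0 ys zs] by blast
    then have "length zs \<le> n" using n zs unfolding P_def by auto
    moreover have "length ys \<le> length zs" using zs list_emb_length by blast
    ultimately show "zs = ys" using zs ys(3) subseq_same_length[of ys zs] by simp
  qed (fact ys(1))
  moreover have "set o0 \<subseteq> set ys"
  proof
    fix x assume "x \<in> set o0"
    then obtain y where "y \<in> set ys" "x = y" using list_emb_set[OF ys(2)] by blast
    then show "x \<in> set ys" by simp
  qed
  ultimately have "ys \<in> max_orders T S \<and> set o0 \<subseteq> set ys" unfolding max_orders_def by simp
  then show ?thesis by blast
qed

lemma covered:
  assumes "tfg T S" "t \<in> {1..T}" shows "\<exists>c\<in>max_orders T S. t \<in> set c"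
proof -
  have "is_order T S [t]" using assms(2) unfolding is_order_def by auto
  then obtain c where "c \<in> max_orders T S" "set [t] \<subseteq> set c" using extend_order[OF assms(1)] by blast
  then show ?thesis by auto
qed


lemma term_bound:
  fixes p a d :: real
  assumes p: "0 < p" "p \<le> 1" and a: "0 \<le> a" "a \<le> 1" and d: "0 < d" "d \<le> 1/2"
  shows "1 / ((1 - d) * p + d * a) \<le> 1 / p + d * (p - a) / p^2 + d^2 * (2 / p^3)"
proof -
  define h where "h = d * (a - p)"
  define D where "D = (1 - d) * p + d * a"
  have DD: "D = p + h" unfolding D_def h_def by (simp add: algebra_simps)
  have Dge: "D \<ge> p / 2"
  proof -
    have "d * p \<le> (1/2) * p" using d p by (intro mult_right_mono) auto
    then have "(1 - d) * p \<ge> p / 2" by (simp add: algebra_simps)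
    moreover have "d * a \<ge> 0" using a d by simp
    ultimately show ?thesis unfolding D_def by linarith
  qed
  have Dpos: "D > 0" using Dge p by linarith
  have iden: "1 / D = 1 / p - h / p^2 + h^2 / (p^2 * D)"
  proof -
    have hh: "h = D - p" using DD by simp
    show ?thesis using Dpos p unfolding hh by (simp add: field_simps power2_eq_square)
  qed
  have h2: "h^2 \<le> d^2"
  proof -
    have "\<bar>a - p\<bar> \<le> 1" using a p by linarith
    then have "(a - p)^2 \<le> 1" by (simp add: abs_square_le_1)
    then have "d^2 * (a - p)^2 \<le> d^2 * 1" by (intro mult_left_mono) auto
    then show ?thesis unfolding h_def by (simp add: power_mult_distrib)
  qed
  have "h^2 / (p^2 * D) \<le> d^2 / (p^2 * (p / 2))"
    using p Dge Dpos h2 by (intro frac_le) auto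
  also have "\<dots> = d^2 * (2 / p^3)" using p by (simp add: field_simps power2_eq_square power3_eq_cube)
  finally have "h^2 / (p^2 * D) \<le> d^2 * (2 / p^3)" .
  moreover have "- h / p^2 = d * (p - a) / p^2" unfolding h_def by (simp add: algebra_simps)
  ultimately show ?thesis using iden unfolding D_def by linarith
qed

lemma small_le0:
  fixes x K :: real
  assumes "K \<ge> 0" "\<And>d. 0 < d \<Longrightarrow> d \<le> 1/2 \<Longrightarrow> x \<le> d * K"
  shows "x \<le> 0"
proof (rule ccontr)
  assume "\<not> x \<le> 0"
  then have x: "x > 0" by simp
  define d where "d = min (1/2) (x / (K + 1))"
  have d1: "0 < d" unfolding d_def using x assms(1) by auto
  have d2: "d \<le> 1/2" unfolding d_def by (rule min.cobounded1)
  note d = d1 d2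
  have "d * K \<le> x / (K + 1) * K" unfolding d_def using assms(1) by (intro mult_right_mono) auto
  also have "\<dots> < x" using x assms(1) by (simp add: field_simps)
  finally show False using assms(2)[OF d] by simp
qed

lemma jensen_sq:
  fixes p x :: "'a \<Rightarrow> real"
  assumes "finite M" "\<forall>c\<in>M. p c \<ge> 0" "sum p M = 1"
  shows "(\<Sum>c\<in>M. p c * x c)^2 \<le> (\<Sum>c\<in>M. p c * (x c)^2)"
proof -
  define m where "m = (\<Sum>c\<in>M. p c * x c)"
  have "0 \<le> (\<Sum>c\<in>M. p c * (x c - m)^2)" using assms(2) by (intro sum_nonneg) auto
  also have "\<dots> = (\<Sum>c\<in>M. p c * (x c)^2 - 2 * m * (p c * x c) + m^2 * p c)"
    by (intro sum.cong) (auto simp: power2_eq_square algebra_simps)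
  also have "\<dots> = (\<Sum>c\<in>M. p c * (x c)^2) - 2 * m * m + m^2 * 1"
    by (simp add: sum.distrib sum_subtractf sum_distrib_left[symmetric] m_def assms(3))
  finally show ?thesis unfolding m_def by (simp add: power2_eq_square)
qed

lemma union_bound:
  fixes f :: "nat \<Rightarrow> real"
  assumes "\<forall>t. f t \<ge> 0" "\<forall>o1\<in>set Os. sum f (set o1) \<le> B"
  shows "sum f (\<Union>o1\<in>set Os. set o1) \<le> real (length Os) * B"
  using assms(2)
proof (induction Os)
  case Nil then show ?case by simp
next
  case (Cons a Os)
  let ?A = "(\<Union>o1\<in>set Os. set o1)"
  have "finite ?A" by auto
  have "sum f (set a \<union> ?A) = sum f (set a) + sum f ?A - sum f (set a \<inter> ?A)"
    by (simp add: sum_Un)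
  also have "\<dots> \<le> sum f (set a) + sum f ?A" using assms(1) by (simp add: sum_nonneg)
  also have "\<dots> \<le> B + real (length Os) * B" using Cons by (intro add_mono) auto
  finally show ?case by (simp add: algebra_simps)
qed



definition piv :: "nat list set \<Rightarrow> (nat list \<Rightarrow> real) \<Rightarrow> nat \<Rightarrow> real" where
  "piv M p t = sum p {c\<in>M. t \<in> set c}"

definition Fv :: "nat list set \<Rightarrow> nat set \<Rightarrow> (nat list \<Rightarrow> real) \<Rightarrow> real" where
  "Fv M U p = (\<Sum>t\<in>U. 1 / piv M p t)"

definition Delta :: "nat list set \<Rightarrow> (nat list \<Rightarrow> real) set" where
  "Delta M = {p. p \<in> Pi UNIV (\<lambda>c. if c \<in> M then {0..1} else {0}) \<and> sum p M = 1}"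

lemma Delta_nonneg: "p \<in> Delta M \<Longrightarrow> p c \<ge> 0"
  unfolding Delta_def by (cases "c \<in> M") (auto simp: Pi_def split: if_splits dest!: spec[of _ c])

lemma Delta_le1: "p \<in> Delta M \<Longrightarrow> p c \<le> 1"
  unfolding Delta_def by (cases "c \<in> M") (auto simp: Pi_def split: if_splits dest!: spec[of _ c])

lemma Delta_out: "p \<in> Delta M \<Longrightarrow> c \<notin> M \<Longrightarrow> p c = 0"
  unfolding Delta_def by (auto simp: Pi_def split: if_splits dest!: spec[of _ c])

lemma Delta_sum: "p \<in> Delta M \<Longrightarrow> sum p M = 1"
  unfolding Delta_def by auto

lemma piv_nonneg: "p \<in> Delta M \<Longrightarrow> piv M p t \<ge> 0"
  unfolding piv_def using Delta_nonneg by (simp add: sum_nonneg)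

lemma piv_le1: assumes "finite M" "p \<in> Delta M" shows "piv M p t \<le> 1"
proof -
  have "piv M p t \<le> sum p M" unfolding piv_def
    using assms Delta_nonneg by (intro sum_mono2) auto
  then show ?thesis using Delta_sum[OF assms(2)] by simp
qed

lemma UB_le:
  assumes tfg: "tfg T S" and MM: "M = max_orders T S" and fin: "finite M"
    and p: "p \<in> Delta M" and pos: "\<forall>t\<in>{1..T}. piv M p t > 0"
  shows "UB T S \<le> sqrt (Fv M {1..T} p)"
proof -
  let ?U = "{1..T}"
  have sub: "\<And>c. c \<in> M \<Longrightarrow> set c \<subseteq> ?U"
    unfolding MM max_orders_def is_max_order_def is_order_def by auto
  define lam where "lam c t = (if c \<in> M \<and> t \<in> set c then p c / piv M p t else 0)" for c t
  define g where "g c = (\<Sum>t\<in>set c. 1 / (piv M p t)^2)" for c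
  define V where "V = (\<Sum>c\<in>M. sqrt (\<Sum>t\<in>set c. (lam c t)\<^sup>2))"
  have feas1: "\<forall>t\<in>?U. (\<Sum>c\<in>max_orders T S. lam c t) = 1"
  proof
    fix t assume t: "t \<in> ?U"
    have "(\<Sum>c\<in>M. lam c t) = (\<Sum>c\<in>{c\<in>M. t \<in> set c}. p c / piv M p t)"
      unfolding lam_def using fin by (simp add: sum.inter_filter)
    also have "\<dots> = piv M p t / piv M p t" unfolding piv_def by (rule sum_divide_distrib[symmetric])
    also have "\<dots> = 1" using pos t by (metis less_irrefl divide_self)
    finally show "(\<Sum>c\<in>max_orders T S. lam c t) = 1" using MM by simp
  qed
  have feas2: "\<forall>c\<in>max_orders T S. \<forall>t. t \<notin> set c \<longrightarrow> lam c t = 0" unfolding lam_def by auto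
  have feas3: "\<forall>c t. lam c t \<ge> 0" unfolding lam_def using Delta_nonneg[OF p] piv_nonneg[OF p] by auto
  have Vmem: "V \<in> {(\<Sum>c\<in>max_orders T S. sqrt (\<Sum>t\<in>set c. (lam c t)\<^sup>2)) | lam.
       (\<forall>t\<in>{1..T}. (\<Sum>c\<in>max_orders T S. lam c t) = 1) \<and>
       (\<forall>c\<in>max_orders T S. \<forall>t. t \<notin> set c \<longrightarrow> lam c t = 0) \<and>
       (\<forall>c t. lam c t \<ge> 0)}"
    unfolding V_def MM using feas1 feas2 feas3 MM by blast
  have bdd: "bdd_below {(\<Sum>c\<in>max_orders T S. sqrt (\<Sum>t\<in>set c. (lam c t)\<^sup>2)) | lam.
       (\<forall>t\<in>{1..T}. (\<Sum>c\<in>max_orders T S. lam c t) = 1) \<and>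
       (\<forall>c\<in>max_orders T S. \<forall>t. t \<notin> set c \<longrightarrow> lam c t = 0) \<and>
       (\<forall>c t. lam c t \<ge> 0)}"
    by (rule bdd_belowI[of _ 0]) (auto intro!: sum_nonneg)
  have UBV: "UB T S \<le> V" unfolding UB_def by (rule cInf_lower[OF Vmem bdd])
  have V_eq: "V = (\<Sum>c\<in>M. p c * sqrt (g c))"
  proof (unfold V_def, rule sum.cong[OF refl])
    fix c assume c: "c \<in> M"
    have "(\<Sum>t\<in>set c. (lam c t)\<^sup>2) = (\<Sum>t\<in>set c. (p c)^2 * (1 / (piv M p t)^2))"
      unfolding lam_def using c by (intro sum.cong) (auto simp: power_divide)
    also have "\<dots> = (p c)^2 * g c" unfolding g_def by (simp add: sum_distrib_left)
    finally show "sqrt (\<Sum>t\<in>set c. (lam c t)\<^sup>2) = p c * sqrt (g c)"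
      using Delta_nonneg[OF p] by (simp add: real_sqrt_mult)
  qed
  have gnn: "g c \<ge> 0" for c unfolding g_def by (simp add: sum_nonneg)
  have "V^2 \<le> (\<Sum>c\<in>M. p c * (sqrt (g c))^2)"
    unfolding V_eq using Delta_nonneg[OF p] by (intro jensen_sq[OF fin _ Delta_sum[OF p]]) blast
  also have "\<dots> = (\<Sum>c\<in>M. p c * g c)" using gnn by simp
  also have "\<dots> = (\<Sum>c\<in>M. \<Sum>t\<in>?U. if t \<in> set c then p c / (piv M p t)^2 else 0)"
  proof (rule sum.cong[OF refl])
    fix c assume c: "c \<in> M"
    have "p c * g c = (\<Sum>t\<in>set c. p c / (piv M p t)^2)" unfolding g_def by (simp add: sum_distrib_left)
    also have "\<dots> = (\<Sum>t\<in>?U \<inter> set c. p c / (piv M p t)^2)" using sub[OF c] by (simp add: Int_absorb1)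
    also have "\<dots> = (\<Sum>t\<in>?U. if t \<in> set c then p c / (piv M p t)^2 else 0)"
      by (simp add: sum.inter_restrict)
    finally show "p c * g c = \<dots>" .
  qed
  also have "\<dots> = (\<Sum>t\<in>?U. \<Sum>c\<in>M. if t \<in> set c then p c / (piv M p t)^2 else 0)"
    by (rule sum.swap)
  also have "\<dots> = (\<Sum>t\<in>?U. 1 / piv M p t)"
  proof (rule sum.cong[OF refl])
    fix t assume t: "t \<in> ?U"
    have "(\<Sum>c\<in>M. if t \<in> set c then p c / (piv M p t)^2 else 0) = piv M p t / (piv M p t)^2"
      unfolding piv_def using fin by (simp add: sum.inter_filter[symmetric] sum_divide_distrib)
    also have "\<dots> = 1 / piv M p t" using pos t by (simp add: power2_eq_square)
    finally show "(\<Sum>c\<in>M. if t \<in> set c then p c / (piv M p t)^2 else 0) = 1 / piv M p t" .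
  qed
  finally have V2: "V^2 \<le> Fv M ?U p" unfolding Fv_def .
  have "V \<ge> 0" unfolding V_def by (simp add: sum_nonneg)
  then have "V \<le> sqrt (Fv M ?U p)" using V2 real_le_rsqrt by blast
  then show ?thesis using UBV by linarith
qed

lemma cont_piv: "continuous_on A (\<lambda>p. piv M p t)"
  unfolding piv_def by (intro continuous_on_sum continuous_on_subset[OF continuous_on_product_coordinates]) auto

lemma minimizer:
  assumes fin: "finite M" and finU: "finite U" and Une: "U \<noteq> {}"
    and cov: "\<forall>t\<in>U. \<exists>c\<in>M. t \<in> set c"
  shows "\<exists>p\<in>Delta M. (\<forall>t\<in>U. piv M p t > 0) \<and>
           (\<forall>q\<in>Delta M. (\<forall>t\<in>U. piv M q t > 0) \<longrightarrow> Fv M U p \<le> Fv M U q)"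
proof -
  have Mne: "M \<noteq> {}" using cov Une by blast
  then have cM: "card M \<ge> 1" using fin by (simp add: Suc_le_eq card_gt_0_iff)
  define p0 where "p0 c = (if c \<in> M then 1 / real (card M) else 0)" for c
  have p0D: "p0 \<in> Delta M"
    unfolding Delta_def p0_def using cM fin by (auto simp: Pi_def)
  have p0pos: "piv M p0 t > 0" if t: "t \<in> U" for t
  proof -
    obtain c where c: "c \<in> M" "t \<in> set c" using cov t by blast
    have "p0 c \<le> piv M p0 t" unfolding piv_def
      using c fin Delta_nonneg[OF p0D] by (intro member_le_sum) auto
    moreover have "p0 c > 0" unfolding p0_def using c cM by simp
    ultimately show ?thesis by linarith
  qed
  define F0 where "F0 = Fv M U p0"
  have termle: "1 / piv M q t \<le> Fv M U q" if "t \<in> U" "q \<in> Delta M" for q t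
    unfolding Fv_def using that finU piv_nonneg by (intro member_le_sum) auto
  have F0nn: "F0 \<ge> 0" unfolding F0_def Fv_def using piv_nonneg[OF p0D] by (simp add: sum_nonneg)
  define m where "m = 1 / (F0 + 1)"
  have mpos: "m > 0" unfolding m_def using F0nn by simp
  let ?B = "\<lambda>c. if c \<in> M then {0..1::real} else {0}"
  define K where "K = Pi UNIV ?B \<inter> {p. sum p M = 1} \<inter> (\<Inter>t\<in>U. {p. m \<le> piv M p t})"
  have KD: "K \<subseteq> Delta M" unfolding K_def Delta_def by auto
  have p0K: "p0 \<in> K"
  proof -
    have "m \<le> piv M p0 t" if t: "t \<in> U" for t
    proof -
      have "1 / piv M p0 t \<le> F0" unfolding F0_def using termle[OF t p0D] .
      then have "1 / piv M p0 t < F0 + 1" by linarith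
      then have "1 < (F0 + 1) * piv M p0 t" using p0pos[OF t] by (simp add: field_simps)
      then show ?thesis unfolding m_def using p0pos[OF t] F0nn by (simp add: field_simps)
    qed
    then show ?thesis using p0D unfolding K_def Delta_def by auto
  qed
  have cK: "compact K"
  proof -
    have c1: "compact (Pi UNIV ?B)"
    proof -
      have "\<forall>i\<in>UNIV. compactin euclidean (?B i)"
        unfolding compactin_euclidean_iff by simp
      then have "compactin (product_topology (\<lambda>_. euclidean) UNIV) (PiE UNIV ?B)"
        using compactin_PiE by blast
      then have "compactin euclidean (Pi UNIV ?B)"
        unfolding euclidean_product_topology PiE_UNIV_domain .
      then show ?thesis unfolding compactin_euclidean_iff .
    qed
    have c2: "closed {p::nat list \<Rightarrow> real. sum p M = 1}"
      by (intro closed_Collect_eq continuous_on_sum continuous_on_const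
           continuous_on_product_coordinates)
    have c3: "closed (\<Inter>t\<in>U. {p::nat list \<Rightarrow> real. m \<le> piv M p t})"
      by (intro closed_INT ballI closed_Collect_le continuous_on_const cont_piv)
    show ?thesis unfolding K_def using c1 c2 c3 by (intro compact_Int_closed) auto
  qed
  have contF: "continuous_on K (Fv M U)"
  proof -
    have "continuous_on K (\<lambda>p. \<Sum>t\<in>U. 1 / piv M p t)"
    proof (intro continuous_on_sum continuous_on_divide continuous_on_const cont_piv ballI)
      fix t p assume "t \<in> U" "p \<in> K"
      then have "m \<le> piv M p t" unfolding K_def by auto
      then show "piv M p t \<noteq> 0" using mpos by linarith
    qed
    then show ?thesis unfolding Fv_def[abs_def] .
  qed
  obtain ps where ps: "ps \<in> K" "\<forall>y\<in>K. Fv M U ps \<le> Fv M U y"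
    using continuous_attains_inf[OF cK _ contF] p0K by blast
  have pspos: "\<forall>t\<in>U. piv M ps t > 0" using ps(1) mpos unfolding K_def by fastforce
  have "Fv M U ps \<le> Fv M U q" if q: "q \<in> Delta M" "\<forall>t\<in>U. piv M q t > 0" for q
  proof (cases "\<forall>t\<in>U. m \<le> piv M q t")
    case True
    then have "q \<in> K" using q(1) unfolding K_def Delta_def by auto
    then show ?thesis using ps by blast
  next
    case False
    then obtain t where t: "t \<in> U" "piv M q t < m" by force
    have "Fv M U ps \<le> F0" unfolding F0_def using ps p0K by blast
    also have "F0 < 1 / m" unfolding m_def by simp
    also have "1 / m < 1 / piv M q t" using t q(2) by (intro divide_strict_left_mono) auto
    also have "\<dots> \<le> Fv M U q" using termle[OF t(1) q(1)] .
    finally show ?thesis by simp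
  qed
  then show ?thesis using ps(1) KD pspos by blast
qed

lemma optimality:
  assumes fin: "finite M" and finU: "finite U" and p: "p \<in> Delta M"
    and pos: "\<forall>t\<in>U. piv M p t > 0"
    and opt: "\<forall>q\<in>Delta M. (\<forall>t\<in>U. piv M q t > 0) \<longrightarrow> Fv M U p \<le> Fv M U q"
    and c: "c \<in> M" and cU: "set c \<subseteq> U"
  shows "(\<Sum>t\<in>set c. 1 / (piv M p t)^2) \<le> Fv M U p"
proof -
  define G where "G = (\<Sum>t\<in>set c. 1 / (piv M p t)^2)"
  define F where "F = Fv M U p"
  define K where "K = (\<Sum>t\<in>U. 2 / (piv M p t)^3)"
  define a where "a t = (if t \<in> set c then 1 else 0::real)" for t
  have Knn: "K \<ge> 0" unfolding K_def using piv_nonneg[OF p] by (intro sum_nonneg) auto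
  have main: "G - F \<le> d * K" if d: "0 < d" "d \<le> 1/2" for d
  proof -
    define q where "q e = (1 - d) * p e + (if e = c then d else 0)" for e
    have qD: "q \<in> Delta M"
    proof -
      have "q e \<in> (if e \<in> M then {0..1} else {0})" for e
      proof (cases "e \<in> M")
        case True
        have "q e \<le> (1 - d) * 1 + d" unfolding q_def using Delta_le1[OF p, of e] d
          by (intro add_mono mult_left_mono) auto
        moreover have "q e \<ge> 0" unfolding q_def using Delta_nonneg[OF p, of e] d by simp
        ultimately show ?thesis using True by simp
      next
        case False
        then show ?thesis unfolding q_def using Delta_out[OF p False] c by auto
      qed
      moreover have "sum q M = 1"
        unfolding q_def using fin c Delta_sum[OF p]
        by (simp add: sum.distrib sum_distrib_left[symmetric])
      ultimately show ?thesis unfolding Delta_def by auto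
    qed
    have piq: "piv M q t = (1 - d) * piv M p t + d * a t" for t
    proof -
      have "piv M q t = (1 - d) * piv M p t + (\<Sum>e\<in>{e\<in>M. t \<in> set e}. if e = c then d else 0)"
        unfolding piv_def q_def by (simp add: sum.distrib sum_distrib_left)
      also have "(\<Sum>e\<in>{e\<in>M. t \<in> set e}. if e = c then d else 0) = d * a t"
        unfolding a_def using fin c by (simp add: sum.delta')
      finally show ?thesis .
    qed
    have qpos: "\<forall>t\<in>U. piv M q t > 0"
    proof
      fix t assume t: "t \<in> U"
      have "(1 - d) * piv M p t > 0" using d pos t by simp
      moreover have "d * a t \<ge> 0" using d unfolding a_def by simp
      ultimately show "piv M q t > 0" unfolding piq by linarith
    qed
    have "F \<le> Fv M U q" unfolding F_def using opt qD qpos by blast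
    also have "\<dots> = (\<Sum>t\<in>U. 1 / ((1 - d) * piv M p t + d * a t))" unfolding Fv_def piq ..
    also have "\<dots> \<le> (\<Sum>t\<in>U. 1 / piv M p t + d * (piv M p t - a t) / (piv M p t)^2 + d^2 * (2 / (piv M p t)^3))"
    proof (rule sum_mono)
      fix t assume t: "t \<in> U"
      show "1 / ((1 - d) * piv M p t + d * a t) \<le> 1 / piv M p t + d * (piv M p t - a t) / (piv M p t)^2 + d^2 * (2 / (piv M p t)^3)"
        using pos t piv_le1[OF fin p] d unfolding a_def by (intro term_bound) auto
    qed
    also have "\<dots> = F + d * (F - G) + d^2 * K"
    proof -
      have e1: "(\<Sum>t\<in>U. d * (piv M p t - a t) / (piv M p t)^2) = d * (\<Sum>t\<in>U. 1 / piv M p t) - d * (\<Sum>t\<in>U. a t / (piv M p t)^2)"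
      proof -
        have "(\<Sum>t\<in>U. d * (piv M p t - a t) / (piv M p t)^2) = (\<Sum>t\<in>U. d * (1 / piv M p t) - d * (a t / (piv M p t)^2))"
          using pos by (intro sum.cong) (auto simp: field_simps power2_eq_square)
        then show ?thesis by (simp add: sum_subtractf sum_distrib_left)
      qed
      have e2: "(\<Sum>t\<in>U. a t / (piv M p t)^2) = G"
      proof -
        have "(\<Sum>t\<in>U. a t / (piv M p t)^2) = (\<Sum>t\<in>U. if t \<in> set c then 1 / (piv M p t)^2 else 0)"
          unfolding a_def by (intro sum.cong) auto
        also have "\<dots> = (\<Sum>t\<in>U \<inter> set c. 1 / (piv M p t)^2)" using finU by (simp add: sum.inter_restrict)
        also have "U \<inter> set c = set c" using cU by auto
        finally show ?thesis unfolding G_def by simp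
      qed
      have e3: "(\<Sum>t\<in>U. d^2 * (2 / (piv M p t)^3)) = d^2 * K" unfolding K_def by (simp add: sum_distrib_left)
      show ?thesis unfolding sum.distrib e1 e2 e3 unfolding F_def Fv_def by (simp add: right_diff_distrib)
    qed
    finally have "0 \<le> d * (F - G) + d^2 * K" by simp
    then have "d * (G - F) \<le> d * (d * K)" by (simp add: power2_eq_square algebra_simps)
    then show "G - F \<le> d * K" using d by simp
  qed
  have "G - F \<le> 0" by (rule small_le0[OF Knn main])
  then show ?thesis unfolding G_def F_def by simp
qed

theorem theorem8:
  fixes T R :: nat and S :: "nat \<Rightarrow> nat set"
  assumes "tfg T S"
    and "R \<ge> 1"
    and "\<forall>t\<in>{1..T}. \<exists>Os. length Os \<le> R \<and> (\<forall>ord\<in>set Os. is_order T S ord) \<and>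
              S t \<subseteq> (\<Union>ord\<in>set Os. set ord)"
  shows "ereal (UB T S) \<le> ereal (sqrt (real R)) * LB T S"
proof -
  note tfg = assms(1)
  let ?U = "{1..T}"
  let ?LBset = "{ereal (\<Sum>t\<in>{1..T}. eps t) | eps.
       (\<forall>t'\<in>{1..T}. (\<Sum>t\<in>S t'. (eps t)\<^sup>2) \<le> 1) \<and> (\<forall>t. eps t \<ge> 0)}"
  let ?UBset = "{(\<Sum>c\<in>max_orders T S. sqrt (\<Sum>t\<in>set c. (lam c t)\<^sup>2)) | lam.
       (\<forall>t\<in>{1..T}. (\<Sum>c\<in>max_orders T S. lam c t) = 1) \<and>
       (\<forall>c\<in>max_orders T S. \<forall>t. t \<notin> set c \<longrightarrow> lam c t = 0) \<and>
       (\<forall>c t. lam c t \<ge> 0)}"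
  have sR: "sqrt (real R) \<ge> 1" using assms(2) by simp
  show ?thesis
  proof (cases "T = 0")
    case True
    have U0: "{1..T} = ({}::nat set)" using True by simp
    have "(0::real) \<in> ?UBset"
      unfolding mem_Collect_eq by (rule exI[of _ "\<lambda>c t. 0::real"]) (simp add: True)
    moreover have "bdd_below ?UBset"
      by (rule bdd_belowI[of _ 0]) (auto intro!: sum_nonneg)
    ultimately have UB0: "UB T S \<le> 0" unfolding UB_def by (rule cInf_lower)
    have "ereal 0 \<in> ?LBset"
      unfolding mem_Collect_eq by (rule exI[of _ "\<lambda>t. 0::real"]) (simp add: True)
    then have LB0: "ereal 0 \<le> LB T S" unfolding LB_def by (rule Sup_upper)
    have "ereal (UB T S) \<le> ereal 0" using UB0 by simp
    also have "\<dots> = ereal (sqrt (real R)) * ereal 0" by simp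
    also have "\<dots> \<le> ereal (sqrt (real R)) * LB T S" using LB0 by (intro ereal_mult_left_mono) auto
    finally show ?thesis .
  next
    case False
    define M where "M = max_orders T S"
    have finM: "finite M" unfolding M_def by (rule finite_max_orders[OF tfg])
    have cov: "\<forall>t\<in>?U. \<exists>c\<in>M. t \<in> set c" unfolding M_def using covered[OF tfg] by blast
    obtain p where p: "p \<in> Delta M" "\<forall>t\<in>?U. piv M p t > 0"
      "\<forall>q\<in>Delta M. (\<forall>t\<in>?U. piv M q t > 0) \<longrightarrow> Fv M ?U p \<le> Fv M ?U q"
      using minimizer[OF finM _ _ cov] False by auto
    define F where "F = Fv M ?U p"
    have Fpos: "F > 0" unfolding F_def Fv_def using False p(2) by (intro sum_pos) auto
    have UBF: "UB T S \<le> sqrt F" unfolding F_def using UB_le[OF tfg M_def finM p(1) p(2)] .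
    have Gc: "(\<Sum>t\<in>set c. 1 / (piv M p t)^2) \<le> F" if c: "c \<in> M" for c
      unfolding F_def using optimality[OF finM _ p(1) p(2) p(3) c] max_order_sub c unfolding M_def by auto
    define eps where "eps t = (if t \<in> ?U then 1 / (piv M p t * sqrt F * sqrt (real R)) else 0)" for t
    have eps_nn: "\<forall>t. eps t \<ge> 0"
    proof
      fix t
      show "eps t \<ge> 0"
      proof (cases "t \<in> ?U")
        case True
        then have "piv M p t > 0" using p(2) by blast
        then have "piv M p t * sqrt F * sqrt (real R) \<ge> 0" using Fpos by simp
        then show ?thesis unfolding eps_def using True by simp
      next
        case False
        then show ?thesis unfolding eps_def if_not_P[OF False] by simp
      qed
    qed
    have eps2: "(eps t)^2 = (1 / (piv M p t)^2) / (F * real R)" if t: "t \<in> ?U" for t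
      unfolding eps_def using t Fpos by (simp add: power_mult_distrib power_divide)
    have Rpos: "real R > 0" using assms(2) by simp
    have cbound: "(\<Sum>t\<in>set c. (eps t)^2) \<le> 1 / real R" if c: "c \<in> M" for c
    proof -
      have "(\<Sum>t\<in>set c. (eps t)^2) = (\<Sum>t\<in>set c. (1 / (piv M p t)^2) / (F * real R))"
        using max_order_sub[of c T S] c eps2 unfolding M_def by (intro sum.cong) auto
      also have "\<dots> = (\<Sum>t\<in>set c. 1 / (piv M p t)^2) / (F * real R)" by (simp add: sum_divide_distrib)
      also have "\<dots> \<le> F / (F * real R)" using Gc[OF c] Fpos Rpos by (intro divide_right_mono) auto
      also have "\<dots> = 1 / real R" using Fpos by simp
      finally show ?thesis .
    qed
    have obound: "(\<Sum>t\<in>set o1. (eps t)^2) \<le> 1 / real R" if o1: "is_order T S o1" for o1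
    proof -
      obtain c where c: "c \<in> M" "set o1 \<subseteq> set c" using extend_order[OF tfg o1] unfolding M_def by blast
      have "(\<Sum>t\<in>set o1. (eps t)^2) \<le> (\<Sum>t\<in>set c. (eps t)^2)" using c(2) by (intro sum_mono2) auto
      then show ?thesis using cbound[OF c(1)] by linarith
    qed
    have feas: "\<forall>t'\<in>?U. (\<Sum>t\<in>S t'. (eps t)\<^sup>2) \<le> 1"
    proof
      fix t' assume t': "t' \<in> ?U"
      obtain Os where Os: "length Os \<le> R" "\<forall>ord\<in>set Os. is_order T S ord"
        "S t' \<subseteq> (\<Union>ord\<in>set Os. set ord)" using assms(3) t' by blast
      have "(\<Sum>t\<in>S t'. (eps t)\<^sup>2) \<le> (\<Sum>t\<in>(\<Union>ord\<in>set Os. set ord). (eps t)\<^sup>2)"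
        using Os(3) by (intro sum_mono2) auto
      also have "\<dots> \<le> real (length Os) * (1 / real R)"
        using obound Os(2) by (intro union_bound) auto
      also have "\<dots> \<le> real R * (1 / real R)" using Os(1) by (intro mult_right_mono) auto
      also have "\<dots> = 1" using Rpos by simp
      finally show "(\<Sum>t\<in>S t'. (eps t)\<^sup>2) \<le> 1" .
    qed
    have sumeps: "(\<Sum>t\<in>?U. eps t) = sqrt F / sqrt (real R)"
    proof -
      have "(\<Sum>t\<in>?U. eps t) = (\<Sum>t\<in>?U. 1 / piv M p t) / (sqrt F * sqrt (real R))"
        unfolding eps_def by (simp add: sum_divide_distrib divide_divide_eq_left mult.assoc)
      also have "\<dots> = F / (sqrt F * sqrt (real R))" unfolding F_def Fv_def ..
      also have "\<dots> = sqrt F / sqrt (real R)" using Fpos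
        by (metis (no_types, lifting) divide_divide_eq_left less_eq_real_def real_div_sqrt)
      finally show ?thesis .
    qed
    have "ereal (\<Sum>t\<in>{1..T}. eps t) \<in> ?LBset" using feas eps_nn by blast
    then have LBge: "ereal (sqrt F / sqrt (real R)) \<le> LB T S" unfolding LB_def sumeps[symmetric]
      by (rule Sup_upper)
    have "ereal (UB T S) \<le> ereal (sqrt F)" using UBF by simp
    also have "\<dots> = ereal (sqrt (real R)) * ereal (sqrt F / sqrt (real R))" using sR by simp
    also have "\<dots> \<le> ereal (sqrt (real R)) * LB T S" using LBge sR by (intro ereal_mult_left_mono) auto
    finally show ?thesis .
  qed
qed

end
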